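(* Let $\mathcal{M}$ be a von Neumann algebra with a faithful tracial state $\tau$, and let $U\in\mathcal{M}$ be a unitary. The following are equivalent: (1) $U=U^*$; (2) the operator $(U+iI)/\sqrt{2}$ is a unitary; (3) there exists a unitary $V\in\mathcal{M}$ such that $\sqrt{2}\,\operatorname{Re}\tau(U^*V)-\operatorname{Im}\tau(U-\sqrt{2}V)=2$. *)

theory Defs
  imports "HOL-Analysis.Analysis"
begin

class complex_inner = real_normed_vector +
  fixes scaleC :: "complex \<Rightarrow> 'a \<Rightarrow> 'a"
    and cinner :: "'a \<Rightarrow> 'a \<Rightarrow> complex"
  assumes scaleC_of_real: "scaleC (complex_of_real r) x = scaleR r x"
    and scaleC_add_right: "scaleC a (x + y) = scaleC a x + scaleC a y"
    and scaleC_add_left: "scaleC (a + b) x = scaleC a x + scaleC b x"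
    and scaleC_scaleC: "scaleC a (scaleC b x) = scaleC (a * b) x"
    and cinner_commute: "cinner x y = cnj (cinner y x)"
    and cinner_add_left: "cinner (x + y) z = cinner x z + cinner y z"
    and cinner_scaleC_left: "cinner (scaleC a x) y = cnj a * cinner x y"
    and cinner_norm: "cinner x x = complex_of_real ((norm x)\<^sup>2)"

class complex_hilbert = complex_inner + complete_space

definition bounded_op :: "('a::complex_inner \<Rightarrow> 'a) \<Rightarrow> bool" where
  "bounded_op T \<longleftrightarrow>
     (\<forall>x y. T (x + y) = T x + T y) \<and>
     (\<forall>c x. T (scaleC c x) = scaleC c (T x)) \<and>
     (\<exists>K. \<forall>x. norm (T x) \<le> K * norm x)"

definition adj :: "('a::complex_inner \<Rightarrow> 'a) \<Rightarrow> ('a \<Rightarrow> 'a)" where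
  "adj T = (THE S. \<forall>x y. cinner (T x) y = cinner x (S y))"

definition commutant :: "('a::complex_inner \<Rightarrow> 'a) set \<Rightarrow> ('a \<Rightarrow> 'a) set" where
  "commutant S = {T. bounded_op T \<and> (\<forall>A\<in>S. T \<circ> A = A \<circ> T)}"

definition von_neumann_algebra :: "('a::complex_hilbert \<Rightarrow> 'a) set \<Rightarrow> bool" where
  "von_neumann_algebra M \<longleftrightarrow>
     M \<subseteq> {T. bounded_op T} \<and>
     id \<in> M \<and>
     (\<forall>A\<in>M. \<forall>B\<in>M. (\<lambda>x. A x + B x) \<in> M) \<and>
     (\<forall>c. \<forall>A\<in>M. (\<lambda>x. scaleC c (A x)) \<in> M) \<and>
     (\<forall>A\<in>M. \<forall>B\<in>M. A \<circ> B \<in> M) \<and>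
     (\<forall>A\<in>M. adj A \<in> M) \<and>
     commutant (commutant M) = M"

definition faithful_tracial_state ::
  "('a::complex_hilbert \<Rightarrow> 'a) set \<Rightarrow> (('a \<Rightarrow> 'a) \<Rightarrow> complex) \<Rightarrow> bool" where
  "faithful_tracial_state M \<tau> \<longleftrightarrow>
     (\<forall>A\<in>M. \<forall>B\<in>M. \<tau> (\<lambda>x. A x + B x) = \<tau> A + \<tau> B) \<and>
     (\<forall>c. \<forall>A\<in>M. \<tau> (\<lambda>x. scaleC c (A x)) = c * \<tau> A) \<and>
     (\<forall>A\<in>M. Im (\<tau> (adj A \<circ> A)) = 0 \<and> Re (\<tau> (adj A \<circ> A)) \<ge> 0) \<and>
     \<tau> id = 1 \<and>
     (\<forall>A\<in>M. \<tau> (adj A \<circ> A) = 0 \<longrightarrow> A = (\<lambda>x. 0)) \<and>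
     (\<forall>A\<in>M. \<forall>B\<in>M. \<tau> (A \<circ> B) = \<tau> (B \<circ> A))"

definition unitary_op :: "('a::complex_inner \<Rightarrow> 'a) \<Rightarrow> bool" where
  "unitary_op U \<longleftrightarrow> bounded_op U \<and> adj U \<circ> U = id \<and> U \<circ> adj U = id"

end

theory Submission
  imports Defs
begin

lemma cinner_add_right: "cinner x (y + z) = cinner x y + cinner x z"
  by (metis cinner_commute cinner_add_left complex_cnj_add)
lemma cinner_scaleC_right: "cinner x (scaleC a y) = a * cinner x y"
  by (metis cinner_commute cinner_scaleC_left complex_cnj_cnj complex_cnj_mult)
lemma scaleC_zero_left: "scaleC 0 x = 0"
  using scaleC_of_real[of 0 x] by simp
lemma scaleC_one: "scaleC 1 x = x"
  using scaleC_of_real[of 1 x] by simp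
lemma scaleC_zero_right: "scaleC a 0 = 0"
  using scaleC_add_right[of a 0 0] by simp
lemma scaleC_minus_right: "scaleC a (- x) = - scaleC a x"
  using minus_unique[of "scaleC a x" "scaleC a (-x)"] scaleC_add_right[of a x "-x"] by (simp add: scaleC_zero_right)
lemma scaleC_diff_right: "scaleC a (x - y) = scaleC a x - scaleC a y"
  using scaleC_add_right[of a x "-y"] by (simp add: scaleC_minus_right)
lemma scaleC_minus_left: "scaleC (- a) x = - scaleC a x"
  using minus_unique[of "scaleC a x" "scaleC (-a) x"] scaleC_add_left[of a "-a" x] by (simp add: scaleC_zero_left)
lemma cinner_zero_left: "cinner 0 y = 0"
  using cinner_add_left[of 0 0 y] by simp
lemma cinner_zero_right: "cinner y 0 = 0"
  using cinner_add_right[of y 0 0] by simp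
lemma cinner_minus_left: "cinner (- x) y = - cinner x y"
  using minus_unique[of "cinner x y" "cinner (-x) y"] cinner_add_left[of x "-x" y] by (simp add: cinner_zero_left)
lemma cinner_minus_right: "cinner y (- x) = - cinner y x"
  using minus_unique[of "cinner y x" "cinner y (-x)"] cinner_add_right[of y x "-x"] by (simp add: cinner_zero_right)
lemma cinner_diff_left: "cinner (x - z) y = cinner x y - cinner z y"
  using cinner_add_left[of x "-z" y] by (simp add: cinner_minus_left)
lemma cinner_diff_right: "cinner y (x - z) = cinner y x - cinner y z"
  using cinner_add_right[of y x "-z"] by (simp add: cinner_minus_right)
lemma cinner_self_eq_zero: "cinner x x = 0 \<longleftrightarrow> x = 0"
  by (simp add: cinner_norm)
lemma vec_eqI: assumes "\<And>z. cinner z u = cinner z v" shows "u = v"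
proof -
  have "cinner (u - v) (u - v) = 0" using assms[of "u - v"] by (simp add: cinner_diff_right)
  thus ?thesis by (simp add: cinner_self_eq_zero)
qed

lemmas cin_simps = cinner_add_right cinner_scaleC_right cinner_add_left cinner_scaleC_left
  cinner_zero_left cinner_zero_right cinner_minus_left cinner_minus_right cinner_diff_left cinner_diff_right
  scaleC_zero_left scaleC_zero_right scaleC_one

lemma norm_scaleC: "norm (scaleC c x) = cmod c * norm x"
proof -
  have "cinner (scaleC c x) (scaleC c x) = cnj c * c * cinner x x"
    by (simp add: cin_simps scaleC_scaleC)
  hence "complex_of_real ((norm (scaleC c x))\<^sup>2) = cnj c * c * complex_of_real ((norm x)\<^sup>2)"
    by (simp only: cinner_norm)
  also have "\<dots> = complex_of_real ((cmod c * norm x)\<^sup>2)"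
    using complex_norm_square[of c] by (simp add: power_mult_distrib mult.commute)
  finally have "(norm (scaleC c x))\<^sup>2 = (cmod c * norm x)\<^sup>2" using of_real_eq_iff by blast
  thus ?thesis by (simp add: power2_eq_iff_nonneg)
qed

lemma norm_sq_expand0:
  "cinner (x - scaleC c y) (x - scaleC c y) =
     cinner x x - c * cinner x y - cnj c * cinner y x + cnj c * c * cinner y y"
  by (simp add: cin_simps scaleC_scaleC algebra_simps)
lemma norm_sq_expand:
  "complex_of_real ((norm (x - scaleC c y))\<^sup>2) =
     cinner x x - c * cinner x y - cnj c * cinner y x + cnj c * c * cinner y y"
  using norm_sq_expand0 by (metis cinner_norm)

lemma proj_identity:
  assumes "y \<noteq> 0"
  shows "(norm (w - scaleC (cinner y w / complex_of_real ((norm y)\<^sup>2)) y))\<^sup>2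
          = (norm w)\<^sup>2 - (cmod (cinner y w))\<^sup>2 / (norm y)\<^sup>2"
proof -
  define p where "p = cinner y w"
  define n where "n = (norm y)\<^sup>2"
  have n0: "n \<noteq> 0" using assms by (simp add: n_def)
  have wy: "cinner w y = cnj p" by (simp add: p_def cinner_commute[of w y])
  have "complex_of_real ((norm (w - scaleC (p / complex_of_real n) y))\<^sup>2)
      = complex_of_real ((norm w)\<^sup>2) - p * cnj p / complex_of_real n"
    unfolding norm_sq_expand wy
    by (simp add: cinner_norm n_def[symmetric] p_def[symmetric] field_simps n0)
  also have "\<dots> = complex_of_real ((norm w)\<^sup>2 - (cmod p)\<^sup>2 / n)"
    using complex_norm_square[of p] by simp
  finally show ?thesis unfolding p_def n_def using of_real_eq_iff by blast
qed

lemma cauchy_schwarz: "cmod (cinner x y) \<le> norm x * norm y"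
proof (cases "x = 0")
  case True thus ?thesis by (simp add: cinner_zero_left)
next
  case False
  have e: "(norm y)\<^sup>2 - (cmod (cinner x y))\<^sup>2 / (norm x)\<^sup>2
     = (norm (y - scaleC (cinner x y / complex_of_real ((norm x)\<^sup>2)) x))\<^sup>2"
    using proj_identity[OF False, of y] by (rule sym)
  have "0 \<le> (norm y)\<^sup>2 - (cmod (cinner x y))\<^sup>2 / (norm x)\<^sup>2"
    unfolding e by (rule zero_le_power2)
  moreover have "(norm x)\<^sup>2 > 0" using False by simp
  ultimately have "(cmod (cinner x y))\<^sup>2 / (norm x)\<^sup>2 \<le> (norm y)\<^sup>2" by simp
  hence "(cmod (cinner x y))\<^sup>2 \<le> (norm y)\<^sup>2 * (norm x)\<^sup>2" using \<open>(norm x)\<^sup>2 > 0\<close>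
    using pos_divide_le_eq by blast
  hence "(cmod (cinner x y))\<^sup>2 \<le> (norm x * norm y)\<^sup>2"
    by (metis power_mult_distrib mult.commute)
  thus ?thesis by (rule power2_le_imp_le) simp
qed



lemma parallelogram:
  "(norm (a - b))\<^sup>2 + (norm (a + b))\<^sup>2 = 2 * (norm a)\<^sup>2 + 2 * (norm (b::'a::complex_inner))\<^sup>2"
proof -
  have "cinner (a - b) (a - b) + cinner (a + b) (a + b) = 2 * cinner a a + 2 * cinner b b"
    by (simp add: cin_simps algebra_simps)
  hence "complex_of_real ((norm (a - b))\<^sup>2 + (norm (a + b))\<^sup>2) = complex_of_real (2 * (norm a)\<^sup>2 + 2 * (norm b)\<^sup>2)"
    by (simp add: cinner_norm)
  thus ?thesis using of_real_eq_iff by blast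
qed

lemma riesz:
  fixes f :: "'a::complex_hilbert \<Rightarrow> complex"
  assumes add: "\<And>x y. f (x + y) = f x + f y"
    and hom: "\<And>c x. f (scaleC c x) = c * f x"
    and bnd: "\<And>x. cmod (f x) \<le> B * norm x"
  shows "\<exists>z. \<forall>x. f x = cinner z x"
proof (cases "\<forall>x. f x = 0")
  case True thus ?thesis by (auto intro!: exI[of _ 0] simp: cinner_zero_left)
next
  case False
  then obtain x1 where x1: "f x1 \<noteq> 0" by auto
  define x0 where "x0 = scaleC (1 / f x1) x1"
  have fx0: "f x0 = 1" using x1 by (simp add: x0_def hom)
  have f0: "f 0 = 0" using add[of 0 0] by simp
  have fminus: "f (x - y) = f x - f y" for x y using add[of "x - y" y] by simp
  have blin: "bounded_linear f"
  proof
    show "f (x + y) = f x + f y" for x y by (rule add)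
    show "f (scaleR r x) = scaleR r (f x)" for r x
      using hom[of "complex_of_real r" x] by (simp add: scaleC_of_real scaleR_conv_of_real)
    show "\<exists>K. \<forall>x. norm (f x) \<le> norm x * K" using bnd by (metis mult.commute)
  qed
  define K where "K = {k. f k = 0}"
  have closedK: "closed K" unfolding K_def
    by (rule closed_Collect_eq) (auto intro: linear_continuous_on[OF blin])
  have K0: "0 \<in> K" by (simp add: K_def f0)
  have Kadd: "a \<in> K \<Longrightarrow> b \<in> K \<Longrightarrow> a + b \<in> K" for a b by (simp add: K_def add)
  have Ksc: "a \<in> K \<Longrightarrow> scaleC c a \<in> K" for a c by (simp add: K_def hom)
  define d where "d = Inf ((\<lambda>k. norm (x0 - k)) ` K)"
  have bdd: "bdd_below ((\<lambda>k. norm (x0 - k)) ` K)" by (rule bdd_belowI[of _ 0]) auto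
  have d_le: "k \<in> K \<Longrightarrow> d \<le> norm (x0 - k)" for k unfolding d_def by (rule cINF_lower[OF bdd])
  have d0: "0 \<le> d" unfolding d_def using K0 by (intro cINF_greatest) auto
  have "\<forall>n. \<exists>k\<in>K. (norm (x0 - k))\<^sup>2 < d\<^sup>2 + inverse (real (Suc n))"
  proof
    fix n
    have "d < sqrt (d\<^sup>2 + inverse (real (Suc n)))"
      by (rule real_less_rsqrt) simp
    then obtain k where k: "k \<in> K" "norm (x0 - k) < sqrt (d\<^sup>2 + inverse (real (Suc n)))"
      using cInf_lessD[of "(\<lambda>k. norm (x0 - k)) ` K"] K0 unfolding d_def by blast
    have "(norm (x0 - k))\<^sup>2 < (sqrt (d\<^sup>2 + inverse (real (Suc n))))\<^sup>2"
      using k(2) by (intro power_strict_mono) auto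
    also have "\<dots> = d\<^sup>2 + inverse (real (Suc n))"
      by (intro real_sqrt_pow2) (simp add: add_nonneg_nonneg)
    finally show "\<exists>k\<in>K. (norm (x0 - k))\<^sup>2 < d\<^sup>2 + inverse (real (Suc n))" using k(1) by blast
  qed
  then obtain ks where ksK: "\<And>n. ks n \<in> K"
    and ksb: "\<And>n. (norm (x0 - ks n))\<^sup>2 < d\<^sup>2 + inverse (real (Suc n))" by metis
  have cb: "(norm (ks n - ks m))\<^sup>2 \<le> 2 * inverse (real (Suc m)) + 2 * inverse (real (Suc n))" for m n
  proof -
    define mid where "mid = scaleC (1/2) (ks m + ks n)"
    have midK: "mid \<in> K" unfolding mid_def using ksK by (intro Ksc Kadd)
    have e1: "(x0 - ks m) - (x0 - ks n) = ks n - ks m" by simp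
    have e2: "(x0 - ks m) + (x0 - ks n) = scaleC 2 (x0 - mid)"
      by (rule vec_eqI) (simp add: mid_def cin_simps algebra_simps)
    have "norm ((x0 - ks m) + (x0 - ks n)) = 2 * norm (x0 - mid)"
      unfolding e2 norm_scaleC by simp
    hence "(norm ((x0 - ks m) + (x0 - ks n)))\<^sup>2 \<ge> 4 * d\<^sup>2"
      using d_le[OF midK] d0 by (simp add: power_mult_distrib power_mono)
    moreover have "(norm (ks n - ks m))\<^sup>2 + (norm ((x0 - ks m) + (x0 - ks n)))\<^sup>2
        = 2 * (norm (x0 - ks m))\<^sup>2 + 2 * (norm (x0 - ks n))\<^sup>2"
      using parallelogram[of "x0 - ks m" "x0 - ks n"] unfolding e1 .
    ultimately show ?thesis using ksb[of m] ksb[of n] by linarith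
  qed
  have "Cauchy ks"
  proof (rule CauchyI)
    fix e :: real assume e: "0 < e"
    obtain N :: nat where N: "4 / e\<^sup>2 < real N" using reals_Archimedean2 by blast
    have Npos: "0 < real (Suc N)" by simp
    have "4 / e\<^sup>2 < real (Suc N)" using N by simp
    hence N': "4 * inverse (real (Suc N)) < e\<^sup>2" using e Npos
      by (simp add: field_simps)
    show "\<exists>M. \<forall>m\<ge>M. \<forall>n\<ge>M. norm (ks m - ks n) < e"
    proof (intro exI allI impI)
      fix m n assume mn: "N \<le> m" "N \<le> n"
      have im: "inverse (real (Suc m)) \<le> inverse (real (Suc N))" using mn by (simp add: le_imp_inverse_le)
      have in': "inverse (real (Suc n)) \<le> inverse (real (Suc N))" using mn by (simp add: le_imp_inverse_le)
      have "(norm (ks m - ks n))\<^sup>2 < e\<^sup>2" using cb[of m n] im in' N' by linarith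
      thus "norm (ks m - ks n) < e" using e by (simp add: power_less_imp_less_base)
    qed
  qed
  then obtain l where lim: "ks \<longlonglongrightarrow> l" using Cauchy_convergent_iff convergent_def by blast
  have lK: "l \<in> K" using closed_sequentially[OF closedK] ksK lim by blast
  define w where "w = x0 - l"
  have wmin: "(norm w)\<^sup>2 \<le> (norm (x0 - k))\<^sup>2" if "k \<in> K" for k
  proof -
    have t1: "(\<lambda>n. (norm (x0 - ks n))\<^sup>2) \<longlonglongrightarrow> (norm w)\<^sup>2"
      unfolding w_def by (intro tendsto_intros lim)
    have t2: "(\<lambda>n. d\<^sup>2 + inverse (real (Suc n))) \<longlonglongrightarrow> d\<^sup>2 + 0"
      by (intro tendsto_intros LIMSEQ_inverse_real_of_nat)
    have "(norm w)\<^sup>2 \<le> d\<^sup>2 + 0"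
      by (intro LIMSEQ_le[OF t1 t2] exI[of _ 0] allI impI less_imp_le ksb)
    also have "\<dots> \<le> (norm (x0 - k))\<^sup>2" using d_le[OF that] d0 by (simp add: power_mono)
    finally show ?thesis .
  qed
  have orth: "cinner y w = 0" if yK: "y \<in> K" for y
  proof (cases "y = 0")
    case True thus ?thesis by (simp add: cinner_zero_left)
  next
    case False
    define c where "c = cinner y w / complex_of_real ((norm y)\<^sup>2)"
    have "w - scaleC c y = x0 - (l + scaleC c y)" by (simp add: w_def)
    moreover have "l + scaleC c y \<in> K" using lK yK by (intro Kadd Ksc)
    ultimately have "(norm w)\<^sup>2 \<le> (norm (w - scaleC c y))\<^sup>2" using wmin by metis
    also have "\<dots> = (norm w)\<^sup>2 - (cmod (cinner y w))\<^sup>2 / (norm y)\<^sup>2"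
      unfolding c_def by (rule proj_identity[OF False])
    finally have "(cmod (cinner y w))\<^sup>2 / (norm y)\<^sup>2 \<le> 0" by simp
    moreover have "(norm y)\<^sup>2 > 0" using False by simp
    ultimately have "(cmod (cinner y w))\<^sup>2 \<le> 0" by (simp add: divide_le_0_iff)
    thus ?thesis by simp
  qed
  have fw: "f w = 1" using lK fx0 by (simp add: w_def fminus K_def)
  have w0: "w \<noteq> 0" using fw f0 by auto
  define a where "a = 1 / complex_of_real ((norm w)\<^sup>2)"
  show ?thesis
  proof (intro exI allI)
    fix x
    have "x - scaleC (f x) w \<in> K" by (simp add: K_def fminus hom fw)
    hence "cinner (x - scaleC (f x) w) w = 0" by (rule orth)
    hence "cinner w (x - scaleC (f x) w) = 0" by (metis cinner_commute complex_cnj_zero)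
    hence "cinner w x = f x * complex_of_real ((norm w)\<^sup>2)" by (simp add: cin_simps cinner_norm)
    thus "f x = cinner (scaleC a w) x" using w0 by (simp add: cinner_scaleC_left a_def)
  qed
qed

lemma adj_unique:
  assumes "\<forall>x y. cinner (T x) y = cinner x (S y)"
  shows "adj T = S"
  unfolding adj_def
proof (rule the_equality)
  show "\<forall>x y. cinner (T x) y = cinner x (S y)" by (rule assms)
  fix S' assume S': "\<forall>x y. cinner (T x) y = cinner x (S' y)"
  show "S' = S"
  proof
    fix y show "S' y = S y" by (rule vec_eqI) (metis S' assms)
  qed
qed

lemma adj_exists:
  fixes T :: "'a::complex_hilbert \<Rightarrow> 'a"
  assumes "bounded_op T"
  shows "\<forall>x y. cinner (T x) y = cinner x (adj T y)"
proof -
  from assms obtain K where Tadd: "\<And>x y. T (x + y) = T x + T y"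
    and Thom: "\<And>c x. T (scaleC c x) = scaleC c (T x)" and TK: "\<And>x. norm (T x) \<le> K * norm x"
    unfolding bounded_op_def by blast
  have "\<forall>y. \<exists>z. \<forall>x. cinner (T x) y = cinner x z"
  proof
    fix y
    have "\<exists>z. \<forall>x. cinner y (T x) = cinner z x"
    proof (rule riesz)
      show "cinner y (T (x + x')) = cinner y (T x) + cinner y (T x')" for x x'
        by (simp add: Tadd cin_simps)
      show "cinner y (T (scaleC c x)) = c * cinner y (T x)" for c x
        by (simp add: Thom cin_simps)
      show "cmod (cinner y (T x)) \<le> (norm y * K) * norm x" for x
      proof -
        have "cmod (cinner y (T x)) \<le> norm y * norm (T x)" by (rule cauchy_schwarz)
        also have "\<dots> \<le> norm y * (K * norm x)" by (intro mult_left_mono TK) simp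
        finally show ?thesis by (simp add: mult.assoc)
      qed
    qed
    then obtain z where "\<forall>x. cinner y (T x) = cinner z x" by blast
    hence "\<forall>x. cinner (T x) y = cinner x z" by (metis cinner_commute)
    thus "\<exists>z. \<forall>x. cinner (T x) y = cinner x z" by blast
  qed
  then obtain S where S: "\<forall>y x. cinner (T x) y = cinner x (S y)" by metis
  hence "adj T = S" by (intro adj_unique) blast
  thus ?thesis using S by simp
qed



lemma bop_add: "bounded_op T \<Longrightarrow> T (x + y) = T x + T y"
  unfolding bounded_op_def by blast
lemma bop_scaleC: "bounded_op T \<Longrightarrow> T (scaleC c x) = scaleC c (T x)"
  unfolding bounded_op_def by blast
lemma adj_prop: "bounded_op (T::'a::complex_hilbert \<Rightarrow> 'a) \<Longrightarrow> cinner (T x) y = cinner x (adj T y)"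
  using adj_exists by blast
lemma adj_add_pt: "bounded_op (T::'a::complex_hilbert \<Rightarrow> 'a) \<Longrightarrow> adj T (x + y) = adj T x + adj T y"
  by (rule vec_eqI) (simp add: adj_prop[symmetric] cin_simps)
lemma adj_scaleC_pt: "bounded_op (T::'a::complex_hilbert \<Rightarrow> 'a) \<Longrightarrow> adj T (scaleC c x) = scaleC c (adj T x)"
  by (rule vec_eqI) (simp add: adj_prop[symmetric] cin_simps)
lemma adj_id': "adj (\<lambda>x. x) = (\<lambda>x. x)"
  by (rule adj_unique) simp
lemma adj_plus: "bounded_op (A::'a::complex_hilbert \<Rightarrow> 'a) \<Longrightarrow> bounded_op B \<Longrightarrow>
   adj (\<lambda>x. A x + B x) = (\<lambda>x. adj A x + adj B x)"
  by (rule adj_unique) (simp add: adj_prop cin_simps)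
lemma adj_sc: "bounded_op (A::'a::complex_hilbert \<Rightarrow> 'a) \<Longrightarrow>
   adj (\<lambda>x. scaleC c (A x)) = (\<lambda>x. scaleC (cnj c) (adj A x))"
  by (rule adj_unique) (simp add: adj_prop cin_simps)
lemma comp_id': "A \<circ> (\<lambda>x. x) = A" by (simp add: comp_def)

locale vna =
  fixes M :: "('a::complex_hilbert \<Rightarrow> 'a) set" and \<tau> :: "('a \<Rightarrow> 'a) \<Rightarrow> complex"
  assumes vn: "von_neumann_algebra M" and ft: "faithful_tracial_state M \<tau>"
begin

lemma M_bounded: "A \<in> M \<Longrightarrow> bounded_op A" using vn unfolding von_neumann_algebra_def by blast
lemma M_plus: "A \<in> M \<Longrightarrow> B \<in> M \<Longrightarrow> (\<lambda>x. A x + B x) \<in> M" using vn unfolding von_neumann_algebra_def by blast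
lemma M_sc: "A \<in> M \<Longrightarrow> (\<lambda>x. scaleC c (A x)) \<in> M" using vn unfolding von_neumann_algebra_def by blast
lemma M_comp: "A \<in> M \<Longrightarrow> B \<in> M \<Longrightarrow> A \<circ> B \<in> M" using vn unfolding von_neumann_algebra_def by blast
lemma M_adj: "A \<in> M \<Longrightarrow> adj A \<in> M" using vn unfolding von_neumann_algebra_def by blast
lemma M_id: "(\<lambda>x. x) \<in> M" using vn unfolding von_neumann_algebra_def id_def by blast
lemma M_scid: "(\<lambda>x. scaleC c x) \<in> M" using M_sc[OF M_id] by simp

lemma t_add: "A \<in> M \<Longrightarrow> B \<in> M \<Longrightarrow> \<tau> (\<lambda>x. A x + B x) = \<tau> A + \<tau> B"
  using ft unfolding faithful_tracial_state_def by blast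
lemma t_sc: "A \<in> M \<Longrightarrow> \<tau> (\<lambda>x. scaleC c (A x)) = c * \<tau> A"
  using ft unfolding faithful_tracial_state_def by blast
lemma t_id: "\<tau> (\<lambda>x. x) = 1"
  using ft unfolding faithful_tracial_state_def id_def by blast
lemma t_scid: "\<tau> (\<lambda>x. scaleC c x) = c"
  using t_sc[OF M_id, of c] by (simp add: t_id)
lemma t_pos: "A \<in> M \<Longrightarrow> Im (\<tau> (adj A \<circ> A)) = 0"
  using ft unfolding faithful_tracial_state_def by blast
lemma t_faith: "A \<in> M \<Longrightarrow> \<tau> (adj A \<circ> A) = 0 \<Longrightarrow> A = (\<lambda>x. 0)"
  using ft unfolding faithful_tracial_state_def by blast

definition ip where "ip A B = \<tau> (adj A \<circ> B)"

lemmas Mrules = M_plus M_sc M_comp M_adj M_id M_scid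

lemma ip_add_right: "A \<in> M \<Longrightarrow> B \<in> M \<Longrightarrow> C \<in> M \<Longrightarrow> ip A (\<lambda>x. B x + C x) = ip A B + ip A C"
proof -
  assume h: "A \<in> M" "B \<in> M" "C \<in> M"
  have "adj A \<circ> (\<lambda>x. B x + C x) = (\<lambda>x. (adj A \<circ> B) x + (adj A \<circ> C) x)"
    using M_bounded[OF h(1)] by (simp add: comp_def adj_add_pt)
  thus ?thesis unfolding ip_def using h by (simp only:) (rule t_add; intro Mrules)
qed
lemma ip_sc_right: "A \<in> M \<Longrightarrow> B \<in> M \<Longrightarrow> ip A (\<lambda>x. scaleC c (B x)) = c * ip A B"
proof -
  assume h: "A \<in> M" "B \<in> M"
  have "adj A \<circ> (\<lambda>x. scaleC c (B x)) = (\<lambda>x. scaleC c ((adj A \<circ> B) x))"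
    using M_bounded[OF h(1)] by (simp add: comp_def adj_scaleC_pt)
  thus ?thesis unfolding ip_def using h by (simp only:) (rule t_sc; intro Mrules)
qed
lemma ip_add_left: "A \<in> M \<Longrightarrow> B \<in> M \<Longrightarrow> C \<in> M \<Longrightarrow> ip (\<lambda>x. A x + B x) C = ip A C + ip B C"
proof -
  assume h: "A \<in> M" "B \<in> M" "C \<in> M"
  have "adj (\<lambda>x. A x + B x) \<circ> C = (\<lambda>x. (adj A \<circ> C) x + (adj B \<circ> C) x)"
    using M_bounded[OF h(1)] M_bounded[OF h(2)] by (simp add: comp_def adj_plus)
  thus ?thesis unfolding ip_def using h by (simp only:) (rule t_add; intro Mrules)
qed
lemma ip_sc_left: "A \<in> M \<Longrightarrow> B \<in> M \<Longrightarrow> ip (\<lambda>x. scaleC c (A x)) B = cnj c * ip A B"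
proof -
  assume h: "A \<in> M" "B \<in> M"
  have "adj (\<lambda>x. scaleC c (A x)) \<circ> B = (\<lambda>x. scaleC (cnj c) ((adj A \<circ> B) x))"
    using M_bounded[OF h(1)] by (simp add: comp_def adj_sc)
  thus ?thesis unfolding ip_def using h by (simp only:) (rule t_sc; intro Mrules)
qed

lemmas ip_simps = ip_add_right ip_sc_right ip_add_left ip_sc_left

lemma ip_real: "A \<in> M \<Longrightarrow> Im (ip A A) = 0"
  unfolding ip_def by (rule t_pos)

lemma ip_herm: assumes "A \<in> M" "B \<in> M" shows "ip B A = cnj (ip A B)"
proof -
  have "Im (ip (\<lambda>x. A x + B x) (\<lambda>x. A x + B x)) = 0" using assms by (intro ip_real Mrules)
  hence 1: "Im (ip A B + ip B A) = 0" using assms ip_real[OF assms(1)] ip_real[OF assms(2)]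
    by (simp add: ip_simps Mrules)
  have "Im (ip (\<lambda>x. A x + scaleC \<i> (B x)) (\<lambda>x. A x + scaleC \<i> (B x))) = 0" using assms by (intro ip_real Mrules)
  hence 2: "Re (ip A B - ip B A) = 0" using assms ip_real[OF assms(1)] ip_real[OF assms(2)]
    by (simp add: ip_simps Mrules)
  show ?thesis using 1 2 by (simp add: complex_eq_iff)
qed

end



lemma sq2: "complex_of_real (sqrt 2) * complex_of_real (sqrt 2) = 2"
proof -
  have "complex_of_real (sqrt 2 * sqrt 2) = 2" by simp
  thus ?thesis by (simp only: of_real_mult)
qed

lemma sqrt2_facts:
  "complex_of_real (1 / sqrt 2) * complex_of_real (1 / sqrt 2) = 1/2"
  "complex_of_real (sqrt 2) * complex_of_real (1 / sqrt 2) = 1"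
  "cnj (complex_of_real r) = complex_of_real r"
proof -
  have r1: "1 / sqrt 2 * (1 / sqrt 2) = (1/2 :: real)" by (simp add: field_simps)
  have r2: "sqrt 2 * (1 / sqrt 2) = (1 :: real)" by (simp add: field_simps)
  show "complex_of_real (1 / sqrt 2) * complex_of_real (1 / sqrt 2) = 1/2"
  proof -
    have "complex_of_real (1 / sqrt 2 * (1 / sqrt 2)) = 1/2" unfolding r1 by simp
    thus ?thesis by (simp only: of_real_mult)
  qed
  show "complex_of_real (sqrt 2) * complex_of_real (1 / sqrt 2) = 1"
  proof -
    have "complex_of_real (sqrt 2 * (1 / sqrt 2)) = 1" unfolding r2 by simp
    thus ?thesis by (simp only: of_real_mult)
  qed
  show "cnj (complex_of_real r) = complex_of_real r" by simp
qed

lemma alg1: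
  fixes a p s u :: complex
  assumes "2*(a*a) = 1" "a * a * p + a * (a * \<i>) * s - (a * (\<i> * a) * u + a * (\<i> * (a * \<i>)) * p) = p"
  shows "s = u"
proof -
  have "a*a*\<i>*(s - u) = (a * a * p + a * (a * \<i>) * s - (a * (\<i> * a) * u + a * (\<i> * (a * \<i>)) * p)) - p + (1 - 2*(a*a))*p"
    by (simp add: algebra_simps)
  also have "\<dots> = 0" using assms by simp
  finally have "a*a*\<i>*(s - u) = 0" .
  moreover have "a \<noteq> 0" using assms(1) by auto
  ultimately show ?thesis by simp
qed

lemma bop_diff: "bounded_op T \<Longrightarrow> T (x - y) = T x - T y"
  using bop_add[of T "x - y" y] by simp

context vna begin

lemma part1:
  assumes UM: "U \<in> M" and Uu: "unitary_op U"
  shows "U = adj U \<longleftrightarrow> unitary_op (\<lambda>x. scaleC (complex_of_real (1 / sqrt 2)) (U x + scaleC \<i> x))"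
proof -
  define a where "a = complex_of_real (1 / sqrt 2)"
  have aa: "2 * (a * a) = 1" "cnj a = a" unfolding a_def by (simp_all only: sqrt2_facts) simp
  have Ub: "bounded_op U" using Uu unfolding unitary_op_def by blast
  have UU: "adj U (U x) = x" "U (adj U x) = x" for x
    using Uu unfolding unitary_op_def by (auto simp: fun_eq_iff)
  define W where "W = (\<lambda>x. scaleC a (U x + scaleC \<i> x))"
  define W' where "W' = (\<lambda>x. scaleC a (adj U x - scaleC \<i> x))"
  have adjW: "adj W = W'"
    unfolding W_def W'_def by (rule adj_unique) (simp add: cin_simps adj_prop[OF Ub] aa)
  from Ub obtain K where UK: "\<And>x. norm (U x) \<le> K * norm x" unfolding bounded_op_def by blast
  have Wb: "bounded_op W"
    unfolding bounded_op_def
  proof (intro conjI allI)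
    show "W (x + y) = W x + W y" for x y
      unfolding W_def by (simp add: bop_add[OF Ub] scaleC_add_right algebra_simps)
    show "W (scaleC c x) = scaleC c (W x)" for c x
      unfolding W_def by (rule vec_eqI) (simp add: bop_scaleC[OF Ub] cin_simps algebra_simps)
    show "\<exists>K. \<forall>x. norm (W x) \<le> K * norm x"
    proof (intro exI allI)
      fix x
      have "norm (W x) = cmod a * norm (U x + scaleC \<i> x)" unfolding W_def norm_scaleC ..
      also have "\<dots> \<le> cmod a * (norm (U x) + norm (scaleC \<i> x))"
        by (intro mult_left_mono norm_triangle_ineq) simp
      also have "\<dots> \<le> cmod a * (K * norm x + norm x)"
        by (intro mult_left_mono add_mono UK) (simp_all add: norm_scaleC)
      finally show "norm (W x) \<le> (cmod a * (K + 1)) * norm x" by (simp add: algebra_simps)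
    qed
  qed
  show ?thesis
  proof
    assume H: "U = adj U"
    hence H': "adj U = U" by simp
    have UU': "U (U x) = x" for x using UU(1)[of x] H' by simp
    have "W' (W x) = x" for x
    proof (rule vec_eqI)
      fix z
      show "cinner z (W' (W x)) = cinner z x"
        unfolding W_def W'_def H'
        apply (simp only: bop_add[OF Ub] bop_scaleC[OF Ub] bop_diff[OF Ub] UU' cin_simps scaleC_add_right scaleC_diff_right scaleC_scaleC)
        apply (rule trans[of _ "cinner z x + (2 * (a * a) - 1) * cinner z x"])
         apply (simp add: algebra_simps)
        by (simp add: aa(1))
    qed
    moreover have "W (W' x) = x" for x
    proof (rule vec_eqI)
      fix z
      show "cinner z (W (W' x)) = cinner z x"
        unfolding W_def W'_def H'
        apply (simp only: bop_add[OF Ub] bop_scaleC[OF Ub] bop_diff[OF Ub] UU' cin_simps scaleC_add_right scaleC_diff_right scaleC_scaleC)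
        apply (rule trans[of _ "cinner z x + (2 * (a * a) - 1) * cinner z x"])
         apply (simp add: algebra_simps)
        by (simp add: aa(1))
    qed
    ultimately show "unitary_op (\<lambda>x. scaleC (complex_of_real (1 / sqrt 2)) (U x + scaleC \<i> x))"
      unfolding a_def[symmetric] W_def[symmetric] unitary_op_def using Wb adjW
      by (simp add: fun_eq_iff)
  next
    assume "unitary_op (\<lambda>x. scaleC (complex_of_real (1 / sqrt 2)) (U x + scaleC \<i> x))"
    hence "adj W \<circ> W = id" unfolding a_def[symmetric] W_def[symmetric] unitary_op_def by blast
    hence WW: "W' (W x) = x" for x using adjW by (simp add: fun_eq_iff)
    have "adj U x = U x" for x
    proof (rule vec_eqI)
      fix z
      have h: "cinner z (W' (W x)) = cinner z x" by (simp only: WW)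
      show "cinner z (adj U x) = cinner z (U x)"
        using h unfolding W_def W'_def
        apply (simp only: adj_add_pt[OF Ub] adj_scaleC_pt[OF Ub] cin_simps scaleC_add_right scaleC_diff_right scaleC_scaleC UU)
        by (erule alg1[OF aa(1)])
    qed
    thus "U = adj U" by auto
  qed
qed

end


lemma alg2:
  fixes sq a p u q :: complex
  assumes "sq * a = 1" "sq * p + (- u - \<i> * q) = 0"
  shows "p = a * (u + \<i> * q)"
proof -
  have e: "u + \<i> * q = sq * p" using assms(2) by algebra
  show ?thesis unfolding e using assms(1) by algebra
qed

context vna begin

lemma ip_id_left: "ip (\<lambda>x. x) A = \<tau> A"
  unfolding ip_def by (simp add: adj_id' comp_def)
lemma ip_id_right: "ip A (\<lambda>x. x) = \<tau> (adj A)"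
  unfolding ip_def by (simp add: comp_def)
lemma ip_unitary: "unitary_op A \<Longrightarrow> ip A A = 1"
  unfolding ip_def unitary_op_def by (simp add: id_def t_id)
lemma ip_id_id: "ip (\<lambda>x. x) (\<lambda>x. x) = 1"
  by (simp add: ip_id_left t_id)

lemma part2:
  assumes UM: "U \<in> M" and Uu: "unitary_op U"
  shows "U = adj U \<longleftrightarrow> (\<exists>V\<in>M. unitary_op V \<and>
               sqrt 2 * Re (\<tau> (adj U \<circ> V))
                 - Im (\<tau> (\<lambda>x. U x - scaleC (complex_of_real (sqrt 2)) (V x))) = 2)"
proof -
  define a where "a = complex_of_real (1 / sqrt 2)"
  define sq where "sq = complex_of_real (sqrt 2)"
  have sqa: "sq * a = 1" "cnj sq = sq" "cnj a = a" "sq * sq = 2" unfolding a_def sq_def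
    by (simp_all only: sqrt2_facts sq2)
  define W where "W = (\<lambda>x. scaleC a (U x + scaleC \<i> x))"
  have Ub: "bounded_op U" using Uu unfolding unitary_op_def by blast
  have WM: "W \<in> M" unfolding W_def by (intro M_sc M_plus UM M_scid)
  have tUadj: "\<tau> (adj U) = cnj (\<tau> U)"
  proof -
    have "ip U (\<lambda>x. x) = cnj (ip (\<lambda>x. x) U)" by (rule ip_herm) (simp_all add: UM M_id)
    thus ?thesis by (simp add: ip_id_left ip_id_right)
  qed
  show ?thesis
  proof
    assume H: "U = adj U"
    hence H': "adj U = U" by simp
    have Wu: "unitary_op W" using part1[OF UM Uu] H unfolding W_def a_def by simp
    have "cnj (\<tau> U) = \<tau> U" using tUadj H' by simp
    hence tU: "Im (\<tau> U) = 0" by (simp add: complex_eq_iff)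
    have s: "\<tau> (adj U \<circ> W) = a * (1 + \<i> * \<tau> U)"
    proof -
      have "\<tau> (adj U \<circ> W) = ip U W" by (simp add: ip_def)
      also have "\<dots> = a * (ip U U + \<i> * ip U (\<lambda>x. x))"
        unfolding W_def using UM by (simp add: ip_simps M_plus M_scid M_id)
      also have "\<dots> = a * (1 + \<i> * \<tau> U)" using Uu H' by (simp add: ip_unitary ip_id_right)
      finally show ?thesis .
    qed
    have fe: "(\<lambda>x. U x - scaleC sq (W x)) = (\<lambda>x. scaleC (- \<i>) x)"
    proof
      fix x show "U x - scaleC sq (W x) = scaleC (- \<i>) x"
        unfolding W_def
        apply (rule vec_eqI)
        apply (simp only: cin_simps scaleC_scaleC scaleC_add_right bop_add[OF Ub])
        by (simp add: mult.assoc[symmetric] sqa(1))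
    qed
    have t2: "\<tau> (\<lambda>x. U x - scaleC sq (W x)) = - \<i>" unfolding fe by (rule t_scid)
    show "\<exists>V\<in>M. unitary_op V \<and> sqrt 2 * Re (\<tau> (adj U \<circ> V))
                 - Im (\<tau> (\<lambda>x. U x - scaleC (complex_of_real (sqrt 2)) (V x))) = 2"
    proof (intro bexI[of _ W] conjI WM Wu)
      show "sqrt 2 * Re (\<tau> (adj U \<circ> W)) - Im (\<tau> (\<lambda>x. U x - scaleC (complex_of_real (sqrt 2)) (W x))) = 2"
        using t2 unfolding s sq_def a_def using tU by simp
    qed
  next
    assume "\<exists>V\<in>M. unitary_op V \<and> sqrt 2 * Re (\<tau> (adj U \<circ> V))
                 - Im (\<tau> (\<lambda>x. U x - scaleC (complex_of_real (sqrt 2)) (V x))) = 2"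
    then obtain V where VM: "V \<in> M" and Vu: "unitary_op V"
      and cond: "sqrt 2 * Re (\<tau> (adj U \<circ> V)) - Im (\<tau> (\<lambda>x. U x - scaleC sq (V x))) = 2"
      unfolding sq_def by blast
    define Y where "Y = (\<lambda>x. scaleC sq (V x) + (scaleC (-1) (U x) + scaleC (- \<i>) x))"
    have YM: "Y \<in> M" unfolding Y_def by (intro M_sc M_plus UM VM M_scid)
    have tV: "\<tau> (adj V) = cnj (\<tau> V)"
    proof -
      have "ip V (\<lambda>x. x) = cnj (ip (\<lambda>x. x) V)" by (rule ip_herm) (simp_all add: VM M_id)
      thus ?thesis by (simp add: ip_id_left ip_id_right)
    qed
    have sVU: "ip V U = cnj (ip U V)" by (rule ip_herm) (simp_all add: VM UM)
    have fe: "(\<lambda>x. U x - scaleC sq (V x)) = (\<lambda>x. U x + scaleC (- sq) (V x))"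
      by (simp add: scaleC_minus_left)
    have t2: "\<tau> (\<lambda>x. U x - scaleC sq (V x)) = \<tau> U - sq * \<tau> V"
      unfolding fe using UM VM by (simp add: t_add t_sc M_sc)
    have "ip Y Y = 0"
      unfolding Y_def using UM VM
      apply (simp add: ip_simps M_plus M_sc M_scid M_id)
      apply (simp add: ip_unitary[OF Uu] ip_unitary[OF Vu] ip_id_id
          ip_id_left ip_id_right tV tUadj sVU)
      using cond t2 unfolding ip_def[symmetric] sq_def
      by (simp add: complex_eq_iff algebra_simps)
    hence Y0: "Y = (\<lambda>x. 0)" using YM t_faith unfolding ip_def by blast
    have VW: "V = W"
    proof
      fix x show "V x = W x"
      proof (rule vec_eqI)
        fix z
        have "cinner z (Y x) = 0" using Y0 by (simp add: cin_simps)
        thus "cinner z (V x) = cinner z (W x)" unfolding Y_def W_def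
          apply (simp add: cin_simps)
          by (erule alg2[OF sqa(1)])
      qed
    qed
    have "unitary_op (\<lambda>x. scaleC (complex_of_real (1 / sqrt 2)) (U x + scaleC \<i> x))"
      using Vu unfolding VW W_def a_def .
    thus "U = adj U" using part1[OF UM Uu] by simp
  qed
qed

end

theorem lemma2p1:
  fixes M :: "('a::complex_hilbert \<Rightarrow> 'a) set"
    and \<tau> :: "('a \<Rightarrow> 'a) \<Rightarrow> complex"
    and U :: "'a \<Rightarrow> 'a"
  assumes "von_neumann_algebra M"
    and "faithful_tracial_state M \<tau>"
    and "U \<in> M" and "unitary_op U"
  shows "(U = adj U \<longleftrightarrow>
            unitary_op (\<lambda>x. scaleC (complex_of_real (1 / sqrt 2)) (U x + scaleC \<i> x)))
       \<and> (U = adj U \<longleftrightarrow>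
            (\<exists>V\<in>M. unitary_op V \<and>
               sqrt 2 * Re (\<tau> (adj U \<circ> V))
                 - Im (\<tau> (\<lambda>x. U x - scaleC (complex_of_real (sqrt 2)) (V x))) = 2))"
proof -
  interpret vna M \<tau> using assms(1,2) by unfold_locales
  show ?thesis using part1[OF assms(3,4)] part2[OF assms(3,4)] by blast
qed

end
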